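(* Let $M>0$, $0<a<M$, $\mu>0$, $m\in\mathbb{Z}\setminus\{0\}$, $n\in\{0,1,2,\dots\}$, $l\in\{|m|,|m|+1,\dots\}$, and define $$\alpha_1=\frac{ma}{\mu M^2},\quad \alpha_2=\frac{2n+1}{\mu M}\sqrt{1-\frac{a^2}{M^2}},\quad \alpha=\alpha_1-i\alpha_2,\quad \epsilon=2\sqrt{1-\frac{a^2}{M^2}},\quad \beta=6-\frac{l(l+1)}{\mu^2M^2}.$$ Assume $\beta\geq 0$ and define $$q(z)=z^4+\frac{4z}{\beta+\epsilon}\left[(2+\epsilon)(z^2+1)+\alpha(z^2-1)\right]+2\,\frac{16-\beta+3\epsilon}{\beta+\epsilon}\,z^2+1,\quad z\in\mathbb{C},$$ and $h_1,h_2:\mathbb{R}\to\mathbb{R}$ by $h_1(y)=\mathrm{Re}(q(iy))$, $h_2(y)=\mathrm{Im}(q(iy))$. If $\alpha_1>2+\epsilon$ or $\alpha_1<-(2+\epsilon)$, then $q$ has no purely imaginary roots (roots of the form $iy$, $y\in\mathbb{R}$). Moreover: (i) if $\alpha_1>2+\epsilon$, then $h_2$ is strictly decreasing and $h_2((0,\infty))\subset(-\infty,0)$; (ii) if $\alpha_1<-(2+\epsilon)$, then $h_2$ is strictly increasing and $h_2((0,\infty))\subset(0,\infty)$; (iii) if $0<\beta<8+\epsilon$, then $h_1$ has precisely $2$ positive roots $\bar y_0,\bar y_1$ with $0<\bar y_0<\bar y_1$, and $h_1(y)>0$ for $0\leq y<\bar y_0$, $h_1(y)<0$ for $\bar y_0<y<\bar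 y_1$, and $h_1(y)>0$ for $y>\bar y_1$. *)

theory Defs
  imports "HOL-Analysis.Analysis"
begin

definition qpoly :: "complex \<Rightarrow> real \<Rightarrow> real \<Rightarrow> complex \<Rightarrow> complex" where
  "qpoly \<alpha> \<beta> \<epsilon> z =
     z ^ 4
     + (4 * z / complex_of_real (\<beta> + \<epsilon>)) *
         ((complex_of_real (2 + \<epsilon>)) * (z ^ 2 + 1) + \<alpha> * (z ^ 2 - 1))
     + 2 * complex_of_real ((16 - \<beta> + 3 * \<epsilon>) / (\<beta> + \<epsilon>)) * z ^ 2
     + 1"

end

theory Submission
  imports Defs
begin

lemma qform:
  assumes "\<beta> + \<epsilon> = s" "s \<noteq> 0" 
  shows "qpoly (complex_of_real a1 - \<i> * complex_of_real a2) \<beta> \<epsilon> (\<i> * complex_of_real y) =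
     complex_of_real (y^4 - 2*(16-\<beta>+3*\<epsilon>)/s * y^2 + 1 - 4*a2/s * y * (y^2+1))
   + \<i> * complex_of_real (4/s * ((2+\<epsilon>-a1)*y - (2+\<epsilon>+a1)*y^3))"
proof -
  have e: "qpoly (complex_of_real a1 - \<i> * complex_of_real a2) \<beta> \<epsilon> (\<i> * complex_of_real y) =
     (\<i> * complex_of_real y) ^ 4
     + (4 * (\<i> * complex_of_real y) / complex_of_real s) *
         ((complex_of_real (2 + \<epsilon>)) * ((\<i> * complex_of_real y) ^ 2 + 1) + (complex_of_real a1 - \<i> * complex_of_real a2) * ((\<i> * complex_of_real y) ^ 2 - 1))
     + 2 * complex_of_real ((16 - \<beta> + 3 * \<epsilon>) / s) * (\<i> * complex_of_real y) ^ 2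
     + 1" unfolding qpoly_def assms(1) ..
  show ?thesis unfolding e using assms(2)
    by (simp add: complex_eq_iff power2_eq_square power4_eq_xxxx power3_eq_cube field_simps)
qed

lemma cube_less: assumes "(x::real) < y" shows "x^3 < y^3"
proof -
  have "(y-x)*((x + y/2)^2 + 3*y^2/4) > 0"
  proof (cases "y = 0")
    case True then have "x^2 > 0" "0 < y - x" using assms by auto
    then show ?thesis using True mult_pos_pos[of "-x" "x^2"] by simp
  next
    case False
    then have "3*y^2/4 > 0" by simp
    moreover have "(x + y/2)^2 \<ge> 0" by simp
    ultimately have "(x + y/2)^2 + 3*y^2/4 > 0" by linarith
    then show ?thesis using assms by (simp add: mult_pos_pos)
  qed
  moreover have "(y-x)*((x + y/2)^2 + 3*y^2/4) = y^3 - x^3"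
    by (simp add: power2_eq_square power3_eq_cube algebra_simps)
  ultimately show ?thesis by simp
qed

lemma quart_id: fixes c d t t' y :: real
  assumes "d = t + t'" "c = -(t*t') - 2"
  shows "y^4 - d*y^3 - c*y^2 - d*y + 1 = (y^2 - t*y + 1)*(y^2 - t'*y + 1)"
  unfolding assms by (simp add: power2_eq_square power3_eq_cube power4_eq_xxxx algebra_simps)

lemma quartic:
  fixes c d :: real
  assumes c: "c > 2" and d: "d \<ge> 0"
  shows "\<exists>y0 y1. 0 < y0 \<and> y0 < y1 \<and> (\<forall>y. y \<ge> 0 \<longrightarrow>
     (y^4 - d*y^3 - c*y^2 - d*y + 1 = (y-y0)*(y-y1)*(y^2 - ((d - sqrt (d^2+4*(c+2)))/2)*y + 1))
     \<and> (y^2 - ((d - sqrt (d^2+4*(c+2)))/2)*y + 1) > 0)"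
proof -
  define S where "S = sqrt (d^2+4*(c+2))"
  define t where "t = (d+S)/2"
  define t' where "t' = (d-S)/2"
  have nn: "0 \<le> d^2 + 4*(c+2)" using c zero_le_power2[of d] by (smt (verit))
  have S0: "S \<ge> 0" unfolding S_def using nn by simp
  have S2: "S^2 = d^2+4*(c+2)" proof -
    have "0 \<le> d^2 + 4*(c+2)" using c zero_le_power2[of d] by (smt (verit))
    then show ?thesis unfolding S_def by simp
  qed
  have Sd: "S > d"
  proof -
    have "d^2 < S^2" using S2 c by simp
    then show ?thesis using S0 d by (meson power_less_imp_less_base)
  qed
  have t'neg: "t' < 0" unfolding t'_def using Sd by simp
  have tt': "t * t' = -(c+2)" unfolding t_def t'_def using S2
    by (simp add: field_simps power2_eq_square)
  have t2: "t > 2"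
  proof -
    have "(4-d)^2 < S^2" using S2 c d by (simp add: power2_eq_square algebra_simps)
    then have "4 - d < S" using S0 by (smt (verit) power_less_imp_less_base)
    then show ?thesis unfolding t_def by simp
  qed
  define R where "R = sqrt (t^2-4)"
  have t4: "t^2 > 4" using t2 mult_strict_mono[of 2 t 2 t] by (simp add: power2_eq_square)
  have R2: "R^2 = t^2 - 4" unfolding R_def using t4 by simp
  have R0: "R > 0" unfolding R_def using t4 by simp
  have Rt: "R < t"
  proof -
    have "R^2 < t^2" using R2 by simp
    then show ?thesis using t2 R0 by (smt (verit) power_less_imp_less_base)
  qed
  define y0 where "y0 = (t - R)/2"
  define y1 where "y1 = (t + R)/2"
  have p: "y0*y1 = 1" unfolding y0_def y1_def using R2
    by (simp add: field_simps power2_eq_square)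
  have sm: "y0 + y1 = t" unfolding y0_def y1_def by (simp add: field_simps)
  show ?thesis
  proof (intro exI conjI allI impI)
    show "0 < y0" unfolding y0_def using Rt by simp
    show "y0 < y1" unfolding y0_def y1_def using R0 by simp
    fix y :: real assume y: "y \<ge> 0"
    have e1: "(y-y0)*(y-y1) = y^2 - t*y + 1" unfolding sm[symmetric] using p by (simp add: power2_eq_square algebra_simps)
    have e2: "(d - sqrt (d^2+4*(c+2)))/2 = t'" unfolding t'_def S_def ..
    have dd: "d = t + t'" unfolding t_def t'_def by (simp add: field_simps)
    have cc: "c = -(t*t') - 2" using tt' by simp
    show "y^4 - d*y^3 - c*y^2 - d*y + 1 = (y-y0)*(y-y1)*(y^2 - ((d - sqrt (d^2+4*(c+2)))/2)*y + 1)"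
      unfolding e1 e2 using quart_id[OF dd cc] .
    have "t' * y \<le> 0" using t'neg y by (simp add: mult_nonpos_nonneg)
    then show "(y^2 - ((d - sqrt (d^2+4*(c+2)))/2)*y + 1) > 0"
      unfolding e2 using zero_le_power2[of y] by linarith
  qed
qed

theorem mainTheorem9:
  fixes M a \<mu> :: real and m :: int and n l :: nat
    and \<alpha>\<^sub>1 \<alpha>\<^sub>2 \<epsilon> \<beta> :: real and \<alpha> :: complex
    and h\<^sub>1 h\<^sub>2 :: "real \<Rightarrow> real"
  assumes "M > 0" and "0 < a" and "a < M" and "\<mu> > 0"
    and "m \<noteq> 0" and "l \<ge> nat \<bar>m\<bar>"
    and "\<alpha>\<^sub>1 = real_of_int m * a / (\<mu> * M ^ 2)"
    and "\<alpha>\<^sub>2 = (2 * real n + 1) / (\<mu> * M) * sqrt (1 - a ^ 2 / M ^ 2)"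
    and "\<alpha> = complex_of_real \<alpha>\<^sub>1 - \<i> * complex_of_real \<alpha>\<^sub>2"
    and "\<epsilon> = 2 * sqrt (1 - a ^ 2 / M ^ 2)"
    and "\<beta> = 6 - real l * (real l + 1) / (\<mu> ^ 2 * M ^ 2)"
    and "\<beta> \<ge> 0"
    and "\<And>y. h\<^sub>1 y = Re (qpoly \<alpha> \<beta> \<epsilon> (\<i> * complex_of_real y))"
    and "\<And>y. h\<^sub>2 y = Im (qpoly \<alpha> \<beta> \<epsilon> (\<i> * complex_of_real y))"
  shows "((\<alpha>\<^sub>1 > 2 + \<epsilon> \<or> \<alpha>\<^sub>1 < - (2 + \<epsilon>)) \<longrightarrow>
            (\<forall>y::real. qpoly \<alpha> \<beta> \<epsilon> (\<i> * complex_of_real y) \<noteq> 0))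
       \<and> (\<alpha>\<^sub>1 > 2 + \<epsilon> \<longrightarrow>
            (\<forall>x y. x < y \<longrightarrow> h\<^sub>2 y < h\<^sub>2 x) \<and> h\<^sub>2 ` {0<..} \<subseteq> {..<0})
       \<and> (\<alpha>\<^sub>1 < - (2 + \<epsilon>) \<longrightarrow>
            strict_mono h\<^sub>2 \<and> h\<^sub>2 ` {0<..} \<subseteq> {0<..})
       \<and> (0 < \<beta> \<and> \<beta> < 8 + \<epsilon> \<longrightarrow>
            (\<exists>y\<^sub>0 y\<^sub>1. 0 < y\<^sub>0 \<and> y\<^sub>0 < y\<^sub>1
               \<and> {y. y > 0 \<and> h\<^sub>1 y = 0} = {y\<^sub>0, y\<^sub>1}
               \<and> (\<forall>y. 0 \<le> y \<and> y < y\<^sub>0 \<longrightarrow> h\<^sub>1 y > 0)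
               \<and> (\<forall>y. y\<^sub>0 < y \<and> y < y\<^sub>1 \<longrightarrow> h\<^sub>1 y < 0)
               \<and> (\<forall>y. y > y\<^sub>1 \<longrightarrow> h\<^sub>1 y > 0)))"
proof -
  note A = assms
  define s where "s = \<beta> + \<epsilon>"
  have aM: "a^2/M^2 < 1" using A(1-3) by (simp add: power_strict_mono)
  have sq: "sqrt (1 - a ^ 2 / M ^ 2) > 0" using aM by simp
  have eps: "\<epsilon> > 0" using A(10) sq by simp
  have s0: "s > 0" unfolding s_def using eps A(12) by simp
  have a2: "\<alpha>\<^sub>2 \<ge> 0" unfolding A(8) using sq A(1,4) by simp
  define p where "p = 2 + \<epsilon> - \<alpha>\<^sub>1"
  define r where "r = 2 + \<epsilon> + \<alpha>\<^sub>1"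
  define c where "c = 2*(16-\<beta>+3*\<epsilon>)/s"
  define d where "d = 4*\<alpha>\<^sub>2/s"
  have Q: "qpoly \<alpha> \<beta> \<epsilon> (\<i> * complex_of_real y) =
     complex_of_real (y^4 - 2*(16-\<beta>+3*\<epsilon>)/s * y^2 + 1 - 4*\<alpha>\<^sub>2/s * y * (y^2+1))
   + \<i> * complex_of_real (4/s * ((2+\<epsilon>-\<alpha>\<^sub>1)*y - (2+\<epsilon>+\<alpha>\<^sub>1)*y^3))" for y
    unfolding A(9) using qform[of \<beta> \<epsilon> s] s_def s0 by simp
  have H1: "h\<^sub>1 y = y^4 - d*y^3 - c*y^2 - d*y + 1" for y
    unfolding A(13) Q c_def d_def by (simp add: algebra_simps add_divide_distrib power2_eq_square power3_eq_cube)
  have H2: "h\<^sub>2 y = 4/s * (p*y - r*y^3)" for y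
    unfolding A(14) Q p_def r_def by simp
  have H10: "h\<^sub>1 0 = 1" using H1 by simp
  have noroot: "qpoly \<alpha> \<beta> \<epsilon> (\<i> * complex_of_real y) \<noteq> 0"
    if h: "\<alpha>\<^sub>1 > 2 + \<epsilon> \<or> \<alpha>\<^sub>1 < - (2 + \<epsilon>)" for y
  proof
    assume z: "qpoly \<alpha> \<beta> \<epsilon> (\<i> * complex_of_real y) = 0"
    then have "h\<^sub>1 y = 0" "h\<^sub>2 y = 0" using A(13,14) by auto
    have "p - r*y^2 \<noteq> 0"
    proof -
      have "y^2 \<ge> 0" by simp
      from h show ?thesis
      proof
        assume "\<alpha>\<^sub>1 > 2 + \<epsilon>"
        then have "p < 0" "r > 0" unfolding p_def r_def using eps by auto
        then have "p - r*y^2 < 0" using \<open>y^2 \<ge> 0\<close> by (smt (verit) mult_nonneg_nonneg)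
        then show ?thesis by simp
      next
        assume "\<alpha>\<^sub>1 < - (2 + \<epsilon>)"
        then have "p > 0" "r < 0" unfolding p_def r_def using eps by auto
        then have "p - r*y^2 > 0" using \<open>y^2 \<ge> 0\<close> by (smt (verit) mult_nonpos_nonneg)
        then show ?thesis by simp
      qed
    qed
    moreover have "4/s * (y * (p - r*y^2)) = 0" using \<open>h\<^sub>2 y = 0\<close> H2
      by (simp add: algebra_simps power3_eq_cube power2_eq_square)
    ultimately have "y = 0" using s0 by simp
    then show False using \<open>h\<^sub>1 y = 0\<close> H10 by simp
  qed
  have P1: "(\<forall>x y. x < y \<longrightarrow> h\<^sub>2 y < h\<^sub>2 x) \<and> h\<^sub>2 ` {0<..} \<subseteq> {..<0}"
    if h: "\<alpha>\<^sub>1 > 2 + \<epsilon>"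
  proof -
    have pr: "p < 0" "r > 0" unfolding p_def r_def using eps h by auto
    have "4/s > 0" using s0 by simp
    show ?thesis
    proof (intro conjI allI impI subsetI)
      fix x y :: real assume xy: "x < y"
      have "p*y < p*x" using pr xy by simp
      moreover have "r*x^3 < r*y^3" using pr cube_less[OF xy] by simp
      ultimately have "p*y - r*y^3 < p*x - r*x^3" by simp
      then show "h\<^sub>2 y < h\<^sub>2 x" unfolding H2 by (rule mult_strict_left_mono) (use \<open>4/s > 0\<close> in simp)
    next
      fix z assume "z \<in> h\<^sub>2 ` {0<..}"
      then obtain y where y: "y > 0" "z = h\<^sub>2 y" by auto
      have "p*y < 0" using pr y by (simp add: mult_neg_pos)
      moreover have "r*y^3 > 0" using pr y by simp
      ultimately have "p*y - r*y^3 < 0" by simp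
      then have "4/s * (p*y - r*y^3) < 0" using \<open>4/s > 0\<close> by (rule mult_pos_neg[rotated])
      then show "z \<in> {..<0}" unfolding y H2 by simp
    qed
  qed
  have P2: "strict_mono h\<^sub>2 \<and> h\<^sub>2 ` {0<..} \<subseteq> {0<..}"
    if h: "\<alpha>\<^sub>1 < - (2 + \<epsilon>)"
  proof -
    have pr: "p > 0" "r < 0" unfolding p_def r_def using eps h by auto
    have "4/s > 0" using s0 by simp
    show ?thesis
    proof (intro conjI strict_monoI subsetI)
      fix x y :: real assume xy: "x < y"
      have "p*x < p*y" using pr xy by simp
      moreover have "r*y^3 < r*x^3" using pr cube_less[OF xy] by simp
      ultimately have "p*x - r*x^3 < p*y - r*y^3" by simp
      then show "h\<^sub>2 x < h\<^sub>2 y" unfolding H2 by (rule mult_strict_left_mono) (use \<open>4/s > 0\<close> in simp)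
    next
      fix z assume "z \<in> h\<^sub>2 ` {0<..}"
      then obtain y where y: "y > 0" "z = h\<^sub>2 y" by auto
      have "p*y > 0" using pr y by simp
      moreover have "r*y^3 < 0" using pr y by (simp add: mult_neg_pos)
      ultimately have "p*y - r*y^3 > 0" by simp
      then have "4/s * (p*y - r*y^3) > 0" using \<open>4/s > 0\<close> by simp
      then show "z \<in> {0<..}" unfolding y H2 by simp
    qed
  qed
  have P3: "\<exists>y\<^sub>0 y\<^sub>1. 0 < y\<^sub>0 \<and> y\<^sub>0 < y\<^sub>1
               \<and> {y. y > 0 \<and> h\<^sub>1 y = 0} = {y\<^sub>0, y\<^sub>1}
               \<and> (\<forall>y. 0 \<le> y \<and> y < y\<^sub>0 \<longrightarrow> h\<^sub>1 y > 0)
               \<and> (\<forall>y. y\<^sub>0 < y \<and> y < y\<^sub>1 \<longrightarrow> h\<^sub>1 y < 0)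
               \<and> (\<forall>y. y > y\<^sub>1 \<longrightarrow> h\<^sub>1 y > 0)"
    if h: "0 < \<beta> \<and> \<beta> < 8 + \<epsilon>"
  proof -
    have "(2::real) * s < 2 * (16 - \<beta> + 3 * \<epsilon>)" unfolding s_def using h by simp
    then have c2: "c > 2" unfolding c_def using s0 by (simp add: field_simps)
    have d0: "d \<ge> 0" unfolding d_def using a2 s0 by simp
    obtain y0 y1 where y01: "0 < y0" "y0 < y1" and
      F: "\<And>y. y \<ge> 0 \<Longrightarrow> y^4 - d*y^3 - c*y^2 - d*y + 1 = (y-y0)*(y-y1)*(y^2 - ((d - sqrt (d^2+4*(c+2)))/2)*y + 1)
          \<and> (y^2 - ((d - sqrt (d^2+4*(c+2)))/2)*y + 1) > 0"
      using quartic[OF c2 d0] by blast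
    define Qf where "Qf y = y^2 - ((d - sqrt (d^2+4*(c+2)))/2)*y + 1" for y
    have F1: "h\<^sub>1 y = (y-y0)*(y-y1)*Qf y" and F2: "Qf y > 0" if "y \<ge> 0" for y
      using F[OF that] H1 unfolding Qf_def by auto
    have S: "(y > 0 \<and> h\<^sub>1 y = 0) \<longleftrightarrow> (y = y0 \<or> y = y1)" for y
    proof
      assume a: "y > 0 \<and> h\<^sub>1 y = 0"
      then have "(y-y0)*(y-y1)*Qf y = 0" using F1[of y] by simp
      moreover have "Qf y \<noteq> 0" using F2[of y] a by simp
      ultimately show "y = y0 \<or> y = y1" by simp
    next
      assume a: "y = y0 \<or> y = y1"
      then have "y > 0" using y01 by auto
      moreover have "(y-y0)*(y-y1) = 0" using a by auto
      ultimately show "y > 0 \<and> h\<^sub>1 y = 0" using F1[of y] by simp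
    qed
    have Z1: "{y. y > 0 \<and> h\<^sub>1 y = 0} = {y0, y1}"
    proof (rule set_eqI)
      fix y show "y \<in> {y. y > 0 \<and> h\<^sub>1 y = 0} \<longleftrightarrow> y \<in> {y0, y1}" using S[of y] by simp
    qed
    have Z2: "h\<^sub>1 y > 0" if y: "0 \<le> y \<and> y < y0" for y
    proof -
      have "y - y0 < 0" "y - y1 < 0" using y y01 by auto
      then have "(y-y0)*(y-y1) > 0" by (rule mult_neg_neg)
      then show ?thesis using F1[of y] F2[of y] y by simp
    qed
    have Z3: "h\<^sub>1 y < 0" if y: "y0 < y \<and> y < y1" for y
    proof -
      have "y - y0 > 0" "y - y1 < 0" using y y01 by auto
      then have "(y-y0)*(y-y1) < 0" by (rule mult_pos_neg)
      moreover have "Qf y > 0" using F2[of y] y y01 by simp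
      ultimately have "(y-y0)*(y-y1)*Qf y < 0" by (rule mult_neg_pos)
      then show ?thesis using F1[of y] y y01 by simp
    qed
    have Z4: "h\<^sub>1 y > 0" if y: "y > y1" for y
    proof -
      have "y - y0 > 0" "y - y1 > 0" using y y01 by auto
      then have "(y-y0)*(y-y1) > 0" by (rule mult_pos_pos)
      then show ?thesis using F1[of y] F2[of y] y y01 by simp
    qed
    show ?thesis
    proof (rule exI[of _ y0], rule exI[of _ y1], intro conjI)
      show "0 < y0" "y0 < y1" using y01 by auto
      show "{y. y > 0 \<and> h\<^sub>1 y = 0} = {y0, y1}" by (rule Z1)
      show "\<forall>y. 0 \<le> y \<and> y < y0 \<longrightarrow> h\<^sub>1 y > 0" using Z2 by simp
      show "\<forall>y. y0 < y \<and> y < y1 \<longrightarrow> h\<^sub>1 y < 0" using Z3 by simp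
      show "\<forall>y. y > y1 \<longrightarrow> h\<^sub>1 y > 0" using Z4 by simp
    qed
  qed
  show ?thesis
  proof (rule conjI, goal_cases)
    case 1 show ?case using noroot by blast
  next
    case 2 show ?case
    proof (rule conjI, goal_cases)
      case 1 show ?case by (intro impI) (rule P1)
    next
      case 2 show ?case
      proof (rule conjI, goal_cases)
        case 1 show ?case by (intro impI) (rule P2)
      next
        case 2 show ?case by (intro impI) (rule P3)
      qed
    qed
  qed
qed

end
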